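(* Let $I$ be an arbitrary index set and let $\mu$ be a probability measure on the product $\sigma$-algebra $\bigotimes_{i\in I}\mathcal B(\mathbb R)$ on $\mathbb R^I$, with one-dimensional marginal distributions $\mu_i$, $i\in I$. Then there exists a copula measure $C$ on $\mathbb R^I$ such that for each finite subset $J\subseteq I$, $$F_{C_J}\big((F_{\mu_j}(x_j))_{j\in J}\big)=F_{\mu_J}\big((x_j)_{j\in J}\big)\quad\text{for all }(x_j)_{j\in J}\in\mathbb R^J. \qquad (\ast)$$ Moreover, $C$ is unique if $F_{\mu_i}$ is continuous for each $i\in I$. Conversely, let $C$ be a copula measure on $\mathbb R^I$ and let $(\mu_i)_{i\in I}$ be a family of Borel probability measures on $\mathbb R$. Then there exists a unique probability measure $\mu$ on $\bigotimes_{i\in I}\mathcal B(\mathbb R)$ such that $(\ast)$ holds for every finite $J\subseteq I$ (where $F_{\mu_j}$ denotes the distribution function of the given $\mu_j$).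
   Context: For a measure $\nu$ on $(\mathbb R^I,\bigotimes_{i\in I}\mathcal B(\mathbb R))$ and $J\subseteq I$, $\nu_J:=(\pi_J)_*\nu$ is the pushforward under the coordinate projection $\pi_J:\mathbb R^I\to\mathbb R^J$, and $\nu_i:=\nu_{\{i\}}$. For finite $J$, $F_{\nu_J}$ denotes the cumulative distribution function of $\nu_J$ on $\mathbb R^J$, and $F_{\nu_i}$ that of $\nu_i$. A copula measure on $\mathbb R^I$ is a probability measure $C$ on $\bigotimes_{i\in I}\mathcal B(\mathbb R)$ whose one-dimensional marginals $C_i$ are all uniformly distributed on $[0,1]$. *)

theory Defs
  imports "HOL-Probability.Probability"
begin

abbreviation RPi :: "'i set \<Rightarrow> ('i \<Rightarrow> real) measure" where
  "RPi J \<equiv> PiM J (\<lambda>_. borel)"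

definition marg :: "('i \<Rightarrow> real) measure \<Rightarrow> 'i set \<Rightarrow> ('i \<Rightarrow> real) measure" where
  "marg \<nu> J = distr \<nu> (RPi J) (\<lambda>x. restrict x J)"

definition marg1 :: "('i \<Rightarrow> real) measure \<Rightarrow> 'i \<Rightarrow> real measure" where
  "marg1 \<nu> i = distr \<nu> borel (\<lambda>x. x i)"

definition mcdf :: "('i \<Rightarrow> real) measure \<Rightarrow> 'i set \<Rightarrow> ('i \<Rightarrow> real) \<Rightarrow> real" where
  "mcdf M J x = measure M {y \<in> space (RPi J). \<forall>j\<in>J. y j \<le> x j}"

definition copula_measure :: "'i set \<Rightarrow> ('i \<Rightarrow> real) measure \<Rightarrow> bool" where
  "copula_measure I C \<longleftrightarrow> prob_space C \<and> sets C = sets (RPi I) \<and>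
     (\<forall>i\<in>I. marg1 C i = uniform_measure lborel {0..1})"

definition sklar_rel :: "'i set \<Rightarrow> ('i \<Rightarrow> real) measure \<Rightarrow> ('i \<Rightarrow> real) measure \<Rightarrow> ('i \<Rightarrow> real \<Rightarrow> real) \<Rightarrow> bool" where
  "sklar_rel I C \<mu> F \<longleftrightarrow> (\<forall>J. finite J \<and> J \<subseteq> I \<longrightarrow>
     (\<forall>x\<in>space (RPi J). mcdf (marg C J) J (restrict (\<lambda>j. F j (x j)) J) = mcdf (marg \<mu> J) J x))"

end

theory Submission
  imports Defs
begin

lemma box_meas:
  assumes "finite J" "J \<subseteq> I"
  shows "{f \<in> space (RPi I). \<forall>j\<in>J. f j \<le> z j} \<in> sets (RPi I)"
proof -
  have "Measurable.pred (RPi I) (\<lambda>f. \<forall>j\<in>J. f j \<le> z j)"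
    using assms by (intro pred_intros_finite) (auto intro!: measurable_PiM_component_rev)
  then show ?thesis by (simp add: pred_def)
qed

lemma mcdf_marg:
  assumes M: "sets M = sets (RPi I)" and J: "finite J" "J \<subseteq> I"
  shows "mcdf (marg M J) J z = measure M {f \<in> space M. \<forall>j\<in>J. f j \<le> z j}"
proof -
  have meas: "{y \<in> space (RPi J). \<forall>j\<in>J. y j \<le> z j} \<in> sets (RPi J)"
    by (rule box_meas) (use J in auto)
  have r: "(\<lambda>x. restrict x J) \<in> measurable M (RPi J)"
    unfolding measurable_cong_sets[OF M refl] by (rule measurable_restrict_subset[OF J(2)])
  have sp: "space M = space (RPi I)" using M sets_eq_imp_space_eq by blast
  have eq: "(\<lambda>x. restrict x J) -` {y \<in> space (RPi J). \<forall>j\<in>J. y j \<le> z j} \<inter> space M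
      = {f \<in> space M. \<forall>j\<in>J. f j \<le> z j}"
    by (auto simp: space_PiM)
  show ?thesis unfolding mcdf_def marg_def
    using measure_distr[OF r meas] eq by simp
qed

lemma gen_RPi:
  "sets (RPi I) = sigma_sets (space (RPi I))
     {{f \<in> space (RPi I). \<forall>j\<in>J. f j \<le> z j} | J z. finite J \<and> J \<subseteq> I}"
proof -
  let ?E = "\<lambda>i::'a. range (\<lambda>a::real. {..a})"
  let ?P = "{{f\<in>(\<Pi>\<^sub>E i\<in>I. (UNIV::real set)). \<forall>i\<in>j. f i \<in> A i} | A j. j \<in> {j. finite j \<and> j \<subseteq> I} \<and> A \<in> Pi j ?E}"
  have cov: "\<exists>S\<subseteq>?E i. countable S \<and> UNIV = \<Union>S" for i
  proof (intro exI[of _ "range (\<lambda>n::nat. {..real n})"] conjI)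
    show "UNIV = \<Union> (range (\<lambda>n::nat. {..real n}))"
      by (auto intro: real_arch_simple)
  qed auto
  have s: "sets (\<Pi>\<^sub>M i\<in>I. sigma UNIV (?E i)) = sets (sigma (\<Pi>\<^sub>E i\<in>I. UNIV) ?P)"
  proof (rule sets_PiM_sigma[OF cov])
    show "\<Union> {j. finite j \<and> j \<subseteq> I} = I"
    proof
      show "I \<subseteq> \<Union> {j. finite j \<and> j \<subseteq> I}"
      proof
        fix x assume "x \<in> I" then show "x \<in> \<Union> {j. finite j \<and> j \<subseteq> I}"
          by (intro UnionI[of "{x}"]) auto
      qed
    qed blast
  qed auto
  have b: "sigma UNIV (range (\<lambda>a::real. {..a})) = borel"
    by (rule borel_eq_atMost[symmetric])
  have sp: "space (RPi I) = (\<Pi>\<^sub>E i\<in>I. UNIV)" by (simp add: space_PiM)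
  have PE: "?P = {{f \<in> space (RPi I). \<forall>j\<in>J. f j \<le> z j} | J z. finite J \<and> J \<subseteq> I}"
  proof (intro set_eqI iffI)
    fix X assume "X \<in> ?P"
    then have "\<exists>A j. X = {f\<in>(\<Pi>\<^sub>E i\<in>I. (UNIV::real set)). \<forall>i\<in>j. f i \<in> A i} \<and> j \<in> {j. finite j \<and> j \<subseteq> I} \<and> A \<in> Pi j ?E"
      by (simp only: mem_Collect_eq)
    then obtain A j where X: "X = {f\<in>(\<Pi>\<^sub>E i\<in>I. (UNIV::real set)). \<forall>i\<in>j. f i \<in> A i}"
      and j: "finite j" "j \<subseteq> I" and A: "A \<in> Pi j ?E" by blast
    from A have "\<forall>i\<in>j. \<exists>a. A i = {..a}" by (auto simp: Pi_iff)
    then obtain z where z: "\<forall>i\<in>j. A i = {..z i}" using bchoice[of j "\<lambda>i a. A i = {..a}"] by blast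
    have "X = {f \<in> space (RPi I). \<forall>i\<in>j. f i \<le> z i}"
      unfolding X sp using z by auto
    then show "X \<in> {{f \<in> space (RPi I). \<forall>j\<in>J. f j \<le> z j} | J z. finite J \<and> J \<subseteq> I}"
      using j by (intro CollectI exI[of _ j] exI[of _ z]) simp
  next
    fix X assume "X \<in> {{f \<in> space (RPi I). \<forall>j\<in>J. f j \<le> z j} | J z. finite J \<and> J \<subseteq> I}"
    then have "\<exists>J z. X = {f \<in> space (RPi I). \<forall>j\<in>J. f j \<le> z j} \<and> finite J \<and> J \<subseteq> I"
      by (simp only: mem_Collect_eq)
    then obtain J z where X: "X = {f \<in> space (RPi I). \<forall>j\<in>J. f j \<le> z j}" and J: "finite J" "J \<subseteq> I"
      by blast
    have X': "X = {f\<in>(\<Pi>\<^sub>E i\<in>I. (UNIV::real set)). \<forall>i\<in>J. f i \<in> (\<lambda>i. {..z i}) i}"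
      unfolding X sp by auto
    have "(\<lambda>i. {..z i}) \<in> Pi J ?E" by auto
    then show "X \<in> ?P" using J X' by (intro CollectI exI[of _ "\<lambda>i. {..z i}"] exI[of _ J]) simp
  qed
  have "?P \<subseteq> Pow (\<Pi>\<^sub>E i\<in>I. UNIV)" by auto
  then have "sets (sigma (\<Pi>\<^sub>E i\<in>I. UNIV) ?P) = sigma_sets (\<Pi>\<^sub>E i\<in>I. UNIV) ?P"
    by (rule sets_measure_of)
  with s have "sets (RPi I) = sigma_sets (\<Pi>\<^sub>E i\<in>I. UNIV) ?P" by (simp only: b)
  then show ?thesis by (simp only: sp PE)
qed

lemma uniq_boxes:
  assumes P: "prob_space P" "sets P = sets (RPi I)" and Q: "prob_space Q" "sets Q = sets (RPi I)"
  and eq: "\<And>J z. finite J \<Longrightarrow> J \<subseteq> I \<Longrightarrow>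
     measure P {f \<in> space (RPi I). \<forall>j\<in>J. f j \<le> z j} = measure Q {f \<in> space (RPi I). \<forall>j\<in>J. f j \<le> z j}"
  shows "P = Q"
proof -
  interpret P: prob_space P by fact
  interpret Q: prob_space Q by fact
  define E where "E = {{f \<in> space (RPi I). \<forall>j\<in>J. f j \<le> z j} | J z. finite J \<and> J \<subseteq> I}"
  have IS: "Int_stable E"
  proof (rule Int_stableI)
    fix a b assume "a \<in> E" "b \<in> E"
    then obtain J1 z1 J2 z2 where a: "a = {f \<in> space (RPi I). \<forall>j\<in>J1. f j \<le> z1 j}" "finite J1" "J1 \<subseteq> I"
      and b: "b = {f \<in> space (RPi I). \<forall>j\<in>J2. f j \<le> z2 j}" "finite J2" "J2 \<subseteq> I"
      unfolding E_def by blast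
    define z where "z i = (if i \<in> J1 \<and> i \<in> J2 then min (z1 i) (z2 i) else if i \<in> J1 then z1 i else z2 i)" for i
    have "a \<inter> b = {f \<in> space (RPi I). \<forall>j\<in>J1 \<union> J2. f j \<le> z j}"
      unfolding a b z_def by (auto split: if_splits)
    then show "a \<inter> b \<in> E" unfolding E_def using a b by blast
  qed
  have sub: "E \<subseteq> Pow (space (RPi I))" unfolding E_def by auto
  have top: "space (RPi I) \<in> E" unfolding E_def
    by (rule CollectI, rule exI[of _ "{}"], rule exI[of _ "\<lambda>_. 0"]) auto
  show ?thesis
  proof (rule measure_eqI_generator_eq[OF IS sub, where A="\<lambda>_. space (RPi I)"])
    fix X assume "X \<in> E"
    then obtain J z where X: "X = {f \<in> space (RPi I). \<forall>j\<in>J. f j \<le> z j}" "finite J" "J \<subseteq> I"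
      unfolding E_def by blast
    show "emeasure P X = emeasure Q X"
      using eq[OF X(2,3), of z] X(1)
      by (simp add: P.emeasure_eq_measure Q.emeasure_eq_measure)
  next
    show "sets P = sigma_sets (space (RPi I)) E" using P(2) gen_RPi unfolding E_def by metis
    show "sets Q = sigma_sets (space (RPi I)) E" using Q(2) gen_RPi unfolding E_def by metis
    show "range (\<lambda>_. space (RPi I)) \<subseteq> E" using top by auto
    show "(\<Union>i::nat. space (RPi I)) = space (RPi I)" by simp
    show "emeasure P (space (RPi I)) \<noteq> \<infinity>" for i :: nat
      by (simp add: P.emeasure_eq_measure)
  qed
qed



abbreviation Unif :: "real measure" where "Unif \<equiv> uniform_measure lborel {0..1::real}"

definition Fm :: "real measure \<Rightarrow> real \<Rightarrow> real" where "Fm N t = measure N {..<t}"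
definition DT :: "real measure \<Rightarrow> real \<Rightarrow> real \<Rightarrow> real" where
  "DT N y v = Fm N y + v * (cdf N y - Fm N y)"

lemma Unif_prob: "prob_space Unif"
  by (rule prob_space_uniform_measure) auto

lemma sets_Unif[simp, measurable_cong]: "sets Unif = sets borel" by simp

lemma emeasure_Unif: "B \<in> sets borel \<Longrightarrow> emeasure Unif B = emeasure lborel ({0..1} \<inter> B)"
  by (subst emeasure_uniform_measure) (auto simp: divide_ennreal_def)

lemma emeasure_Unif_lessThan: "emeasure Unif {..<a} = ennreal (max 0 (min 1 a))"
proof -
  have "emeasure Unif {..<a} = emeasure lborel ({0..1} \<inter> {..<a})" by (rule emeasure_Unif) auto
  also have "\<dots> = ennreal (max 0 (min 1 a))"
  proof (cases "a \<le> 0")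
    case True then have "{0..1} \<inter> {..<a} = {}" by auto
    then show ?thesis using True by simp
  next
    case False
    show ?thesis
    proof (cases "a \<le> 1")
      case True then have "{0..1} \<inter> {..<a} = {0..<a}" by auto
      then show ?thesis using True False by simp
    next
      case F2: False then have "{0..1} \<inter> {..<a} = {0..1}" by auto
      then show ?thesis using F2 by simp
    qed
  qed
  finally show ?thesis .
qed

lemma emeasure_Unif_atMost: "emeasure Unif {..a} = ennreal (max 0 (min 1 a))"
proof -
  have "emeasure Unif {..a} = emeasure lborel ({0..1} \<inter> {..a})" by (rule emeasure_Unif) auto
  also have "\<dots> = ennreal (max 0 (min 1 a))"
  proof (cases "a < 0")
    case True then have "{0..1} \<inter> {..a} = {}" by auto
    then show ?thesis using True by simp
  next
    case False
    show ?thesis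
    proof (cases "a \<le> 1")
      case True then have "{0..1} \<inter> {..a} = {0..a}" by auto
      then show ?thesis using True False by simp
    next
      case F2: False then have "{0..1} \<inter> {..a} = {0..1}" by auto
      then show ?thesis using F2 by simp
    qed
  qed
  finally show ?thesis .
qed

context real_distribution
begin

lemma Fm_le_cdf: "Fm M y \<le> cdf M y"
  unfolding Fm_def cdf_def by (intro finite_measure_mono) auto

lemma Fm_nonneg: "0 \<le> Fm M y" unfolding Fm_def by simp

lemma cdf_le_Fm: "x < y \<Longrightarrow> cdf M x \<le> Fm M y"
  unfolding Fm_def cdf_def by (intro finite_measure_mono) auto

lemma Fm_mono: "mono (Fm M)"
  unfolding Fm_def mono_def by (intro allI impI finite_measure_mono) auto

lemma measurable_Fm[measurable]: "Fm M \<in> borel_measurable borel"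
  by (rule borel_measurable_mono[OF Fm_mono])

lemma measurable_cdf[measurable]: "cdf M \<in> borel_measurable borel"
  by (rule borel_measurable_mono) (auto simp: mono_def cdf_nondecreasing)

lemma measure_single: "measure M {y} = cdf M y - Fm M y"
proof -
  have e: "{y} = {..y} - {..<y}" by auto
  have "measure M ({..y} - {..<y}) = measure M {..y} - measure M {..<y}"
    by (rule finite_measure_Diff) auto
  then show ?thesis unfolding Fm_def cdf_def e .
qed

lemma Fm_le_of_lt: assumes "\<And>y. y < q \<Longrightarrow> cdf M y < a" shows "Fm M q \<le> a"
proof -
  have "(cdf M \<longlongrightarrow> measure M {..<q}) (at_left q)" by (rule cdf_at_left)
  moreover have "eventually (\<lambda>y. cdf M y \<le> a) (at_left q)"
    by (rule eventually_at_leftI[of "q - 1"]) (auto intro: less_imp_le assms)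
  ultimately show ?thesis unfolding Fm_def
    by (intro tendsto_upperbound) auto
qed

lemma DT_meas[measurable]: "(\<lambda>p. DT M (fst p) (snd p)) \<in> borel_measurable (M \<Otimes>\<^sub>M Unif)"
  unfolding DT_def by measurable

lemma DT_le_cdf: "0 \<le> v \<Longrightarrow> v \<le> 1 \<Longrightarrow> DT M y v \<le> cdf M y"
proof -
  assume v: "0 \<le> v" "v \<le> 1"
  have "v * (cdf M y - Fm M y) \<le> 1 * (cdf M y - Fm M y)"
    using v Fm_le_cdf[of y] by (intro mult_right_mono) auto
  then show ?thesis unfolding DT_def by simp
qed

lemma Fm_le_DT: "0 \<le> v \<Longrightarrow> Fm M y \<le> DT M y v"
  unfolding DT_def using Fm_le_cdf[of y] by simp

end



context real_distribution
begin

lemma DT_lessThan: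
  assumes a: "0 < a" "a < 1"
  shows "emeasure (M \<Otimes>\<^sub>M Unif) {p \<in> space (M \<Otimes>\<^sub>M Unif). DT M (fst p) (snd p) < a} = ennreal a"
proof -
  interpret cdf_distribution M by (simp add: cdf_distribution_def real_distribution_axioms)
  interpret U: prob_space Unif by (rule Unif_prob)
  define q where "q = Inf {x. a \<le> cdf M x}"
  have pi: "a \<le> cdf M x \<longleftrightarrow> q \<le> x" for x unfolding q_def using pseudoinverse[of a x] a by simp
  have lt: "cdf M y < a" if "y < q" for y using pi[of y] that by linarith
  have Fmq: "Fm M q \<le> a" by (rule Fm_le_of_lt[OF lt])
  have aq: "a \<le> cdf M q" using pi by simp
  have Dnn: "0 \<le> cdf M q - Fm M q" using Fm_le_cdf[of q] by simp
  let ?S = "{p \<in> space (M \<Otimes>\<^sub>M Unif). DT M (fst p) (snd p) < a}"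
  have Sm: "?S \<in> sets (M \<Otimes>\<^sub>M Unif)" by measurable
  have vm: "{v. DT M y v < a} \<in> sets borel" for y unfolding DT_def by measurable
  have "emeasure (M \<Otimes>\<^sub>M Unif) ?S = (\<integral>\<^sup>+y. emeasure Unif (Pair y -` ?S) \<partial>M)"
    by (rule U.emeasure_pair_measure_alt[OF Sm])
  also have "\<dots> = (\<integral>\<^sup>+y. emeasure Unif {v. DT M y v < a} \<partial>M)"
    by (intro nn_integral_cong arg_cong[where f="emeasure Unif"]) (auto simp: space_pair_measure)
  also have "\<dots> = (\<integral>\<^sup>+y. indicator {..<q} y + emeasure Unif {v. DT M q v < a} * indicator {q} y \<partial>M)"
  proof (intro nn_integral_cong)
    fix y
    show "emeasure Unif {v. DT M y v < a} = indicator {..<q} y + emeasure Unif {v. DT M q v < a} * indicator {q} y"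
    proof (cases y q rule: linorder_cases)
      case less
      have "{0..1} \<inter> {v. DT M y v < a} = {0..1}"
        using DT_le_cdf[of _ y] lt[OF less] by force
      then show ?thesis using less emeasure_Unif[OF vm[of y]] by simp
    next
      case equal then show ?thesis by simp
    next
      case greater
      have "{0..1} \<inter> {v. DT M y v < a} = {}"
      proof -
        have "a \<le> DT M y v" if "0 \<le> v" for v
          using Fm_le_DT[OF that, of y] cdf_le_Fm[OF greater] aq by linarith
        then show ?thesis by force
      qed
      then show ?thesis using greater emeasure_Unif[OF vm[of y]] by simp
    qed
  qed
  also have "\<dots> = emeasure M {..<q} + emeasure Unif {v. DT M q v < a} * emeasure M {q}"
    by (subst nn_integral_add) (auto simp: nn_integral_cmult_indicator)
  also have "\<dots> = ennreal (Fm M q) + emeasure Unif {v. DT M q v < a} * ennreal (cdf M q - Fm M q)"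
    using measure_single[of q] unfolding Fm_def by (simp add: emeasure_eq_measure)
  also have "\<dots> = ennreal a"
  proof (cases "cdf M q - Fm M q = 0")
    case True
    then show ?thesis using Fmq aq by simp
  next
    case False
    define c where "c = (a - Fm M q) / (cdf M q - Fm M q)"
    have Dpos: "0 < cdf M q - Fm M q" using False Dnn by simp
    have c0: "0 \<le> c" unfolding c_def using Fmq Dpos by (intro divide_nonneg_pos) auto
    have c1: "c \<le> 1" unfolding c_def using aq Dpos by (subst divide_le_eq_1_pos) auto
    have iff: "DT M q v < a \<longleftrightarrow> v < c" for v
    proof -
      have "DT M q v < a \<longleftrightarrow> v * (cdf M q - Fm M q) < a - Fm M q" unfolding DT_def by linarith
      moreover have "v < c \<longleftrightarrow> v * (cdf M q - Fm M q) < a - Fm M q"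
        unfolding c_def by (rule pos_less_divide_eq[OF Dpos])
      ultimately show ?thesis by blast
    qed
    have seteq: "{0..1} \<inter> {v. DT M q v < a} = {0..<c}"
    proof (intro set_eqI)
      fix v show "v \<in> {0..1} \<inter> {v. DT M q v < a} \<longleftrightarrow> v \<in> {0..<c}"
        using iff[of v] c1 by auto
    qed
    have "emeasure Unif {v. DT M q v < a} = emeasure lborel {0..<c}"
      using emeasure_Unif[OF vm[of q]] seteq by simp
    also have "\<dots> = ennreal c" using c0 by simp
    finally have hq: "emeasure Unif {v. DT M q v < a} = ennreal c" .
    have cD: "c * (cdf M q - Fm M q) = a - Fm M q" unfolding c_def using Dpos by simp
    have e1: "ennreal (Fm M q + c * (cdf M q - Fm M q)) = ennreal (Fm M q) + ennreal (c * (cdf M q - Fm M q))"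
      by (rule ennreal_plus) (use c0 Dnn Fm_nonneg[of q] in auto)
    have e2: "ennreal (c * (cdf M q - Fm M q)) = ennreal c * ennreal (cdf M q - Fm M q)"
      by (rule ennreal_mult) (use c0 Dnn in auto)
    have "ennreal (Fm M q) + emeasure Unif {v. DT M q v < a} * ennreal (cdf M q - Fm M q)
        = ennreal (Fm M q + c * (cdf M q - Fm M q))"
      unfolding hq e1 e2 ..
    also have "\<dots> = ennreal a" unfolding cD by simp
    finally show ?thesis .
  qed
  finally show ?thesis .
qed

end



lemma sets_borel_Iio: "sets (borel::real measure) = sigma_sets UNIV (range lessThan)"
proof -
  have "sets (borel::real measure) = sets (sigma UNIV (range lessThan :: real set set))"
    by (subst borel_Iio) (rule refl)
  also have "\<dots> = sigma_sets UNIV (range lessThan)" by (rule sets_measure_of) auto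
  finally show ?thesis .
qed

lemma aux_le0: fixes m::real assumes "m \<le> 1" "\<And>b. 0<b \<Longrightarrow> b<1 \<Longrightarrow> m \<le> b" shows "m \<le> 0"
proof (rule ccontr)
  assume n: "\<not> m \<le> 0"
  then have "m \<le> m / 2" using assms by (intro assms(2)) auto
  then show False using n by linarith
qed

lemma aux_ge1: fixes m::real assumes "0 \<le> m" "\<And>b. 0<b \<Longrightarrow> b<1 \<Longrightarrow> b \<le> m" shows "1 \<le> m"
proof (rule ccontr)
  assume n: "\<not> 1 \<le> m"
  then have "(1 + m) / 2 \<le> m" using assms by (intro assms(2)) auto
  then have "1 + m \<le> 2 * m" by simp
  then show False using n by linarith
qed

context real_distribution
begin

lemma DT_unif: "distr (M \<Otimes>\<^sub>M Unif) borel (\<lambda>p. DT M (fst p) (snd p)) = Unif"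
  (is "?D = _")
proof -
  interpret U: prob_space Unif by (rule Unif_prob)
  interpret P: prob_space "M \<Otimes>\<^sub>M Unif" by (rule prob_space_pair) (rule prob_space_axioms, rule Unif_prob)
  interpret D: prob_space ?D by (rule P.prob_space_distr) measurable
  have sD: "sets ?D = sets borel" by simp
  have eD: "emeasure ?D {..<a} = emeasure (M \<Otimes>\<^sub>M Unif) {p \<in> space (M \<Otimes>\<^sub>M Unif). DT M (fst p) (snd p) < a}" for a
  proof -
    have "emeasure ?D {..<a} = emeasure (M \<Otimes>\<^sub>M Unif) ((\<lambda>p. DT M (fst p) (snd p)) -` {..<a} \<inter> space (M \<Otimes>\<^sub>M Unif))"
      by (rule emeasure_distr) auto
    also have "(\<lambda>p. DT M (fst p) (snd p)) -` {..<a} \<inter> space (M \<Otimes>\<^sub>M Unif) = {p \<in> space (M \<Otimes>\<^sub>M Unif). DT M (fst p) (snd p) < a}"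
      by auto
    finally show ?thesis .
  qed
  have mid: "measure ?D {..<a} = a" if "0 < a" "a < 1" for a
  proof -
    have "ennreal (measure ?D {..<a}) = ennreal a"
      using eD[of a] DT_lessThan[OF that] D.emeasure_eq_measure by simp
    then show ?thesis using that by simp
  qed
  have mono: "measure ?D {..<a} \<le> measure ?D {..<b}" if "a \<le> b" for a b
    by (rule D.finite_measure_mono) (use that in auto)
  have all: "emeasure ?D {..<a} = emeasure Unif {..<a}" for a
  proof -
    consider "a \<le> 0" | "0 < a" "a < 1" | "1 \<le> a" by linarith
    then show ?thesis
    proof cases
      case 1
      let ?m = "measure ?D {..<a}"
      have le: "?m \<le> b" if "0 < b" "b < 1" for b
        using mono[of a b] mid[OF that] 1 that by linarith
      have "?m \<le> 0" by (rule aux_le0[OF D.prob_le_1 le])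
      then have "?m = 0" using measure_nonneg[of ?D "{..<a}"] by linarith
      then have "emeasure ?D {..<a} = ennreal 0" using D.emeasure_eq_measure by simp
      also have "\<dots> = emeasure Unif {..<a}" unfolding emeasure_Unif_lessThan using 1 by simp
      finally show ?thesis .
    next
      case 2
      have "emeasure ?D {..<a} = ennreal a" using mid[OF 2] D.emeasure_eq_measure by simp
      also have "\<dots> = emeasure Unif {..<a}" unfolding emeasure_Unif_lessThan using 2 by simp
      finally show ?thesis .
    next
      case 3
      let ?m = "measure ?D {..<a}"
      have ge: "b \<le> ?m" if "0 < b" "b < 1" for b
        using mono[of b a] mid[OF that] 3 that by linarith
      have "1 \<le> ?m" by (rule aux_ge1[OF measure_nonneg ge])
      then have "?m = 1" using D.prob_le_1[of "{..<a}"] by linarith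
      then have "emeasure ?D {..<a} = ennreal 1" using D.emeasure_eq_measure by simp
      also have "\<dots> = emeasure Unif {..<a}" unfolding emeasure_Unif_lessThan using 3 by simp
      finally show ?thesis .
    qed
  qed
  show ?thesis
  proof (rule measure_eqI_generator_eq[where E="range lessThan" and \<Omega>=UNIV and A="\<lambda>n. {..<real n}"])
    show "Int_stable (range lessThan :: real set set)"
    proof (rule Int_stableI)
      fix x y :: "real set" assume "x \<in> range lessThan" "y \<in> range lessThan"
      then obtain a b where "x = {..<a}" "y = {..<b}" by blast
      then have "x \<inter> y = {..<min a b}" by auto
      then show "x \<inter> y \<in> range lessThan" by blast
    qed
    show "range lessThan \<subseteq> Pow (UNIV :: real set)" by auto
    show "\<And>X. X \<in> range lessThan \<Longrightarrow> emeasure ?D X = emeasure Unif X" using all by blast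
    show "sets ?D = sigma_sets UNIV (range lessThan)" using sD sets_borel_Iio by simp
    show "sets Unif = sigma_sets UNIV (range lessThan)" using sets_borel_Iio by simp
    show "range (\<lambda>n::nat. {..<real n}) \<subseteq> range lessThan" by auto
    show "(\<Union>n::nat. {..<real n}) = UNIV"
    proof (intro set_eqI iffI)
      fix x :: real obtain n :: nat where "x < real n" using reals_Archimedean2 by blast
      then show "x \<in> (\<Union>n::nat. {..<real n})" by blast
    qed auto
    show "emeasure ?D {..<real n} \<noteq> \<infinity>" for n by simp
  qed
qed

end



context real_distribution
begin

lemma DT_AE: "AE p in M \<Otimes>\<^sub>M Unif. (fst p \<le> t \<longleftrightarrow> DT M (fst p) (snd p) \<le> cdf M t)"
proof -
  interpret U: prob_space Unif by (rule Unif_prob)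
  interpret P: prob_space "M \<Otimes>\<^sub>M Unif" by (rule prob_space_pair) (rule prob_space_axioms, rule Unif_prob)
  let ?P = "M \<Otimes>\<^sub>M Unif"
  have spP: "space ?P = UNIV" by (simp add: space_pair_measure)
  let ?f = "\<lambda>p. DT M (fst p) (snd p)"
  define S1 where "S1 = {p \<in> space ?P. fst p \<le> t}"
  define S2 where "S2 = {p \<in> space ?P. ?f p \<le> cdf M t}"
  have S1m: "S1 \<in> sets ?P" unfolding S1_def by measurable
  have S2m: "S2 \<in> sets ?P" unfolding S2_def by measurable
  have null: "UNIV \<times> (- {0..1}) \<in> null_sets ?P"
  proof -
    have "emeasure ?P (UNIV \<times> (- {0..1})) = emeasure M UNIV * emeasure Unif (- {0..1})"
      by (rule U.emeasure_pair_measure_Times) auto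
    also have "emeasure Unif (- {0..1::real}) = emeasure lborel ({0..1::real} \<inter> - {0..1})"
      by (rule emeasure_Unif) auto
    finally have "emeasure ?P (UNIV \<times> (- {0..1})) = 0" by simp
    moreover have "UNIV \<times> (- {0..1::real}) \<in> sets ?P" by measurable
    ultimately show ?thesis by (simp add: null_sets_def)
  qed
  have AET: "AE p in ?P. 0 \<le> snd p \<and> snd p \<le> 1"
    by (rule AE_I'[OF null]) auto
  have m1: "measure ?P S1 = cdf M t"
  proof -
    have "S1 = {..t} \<times> UNIV" unfolding S1_def spP by auto
    then have "emeasure ?P S1 = emeasure M {..t} * emeasure Unif UNIV"
      using U.emeasure_pair_measure_Times[of "{..t}" M UNIV] by simp
    also have "\<dots> = ennreal (cdf M t)"
      using U.emeasure_space_1 by (simp add: emeasure_eq_measure cdf_def)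
    finally show ?thesis using P.emeasure_eq_measure by (simp add: cdf_nonneg)
  qed
  have m2: "measure ?P S2 = cdf M t"
  proof -
    have "measure (distr ?P borel ?f) {..cdf M t} = measure ?P (?f -` {..cdf M t} \<inter> space ?P)"
      by (rule measure_distr) auto
    also have "?f -` {..cdf M t} \<inter> space ?P = S2" unfolding S2_def by auto
    finally have "measure ?P S2 = measure Unif {..cdf M t}" using DT_unif by simp
    also have "\<dots> = cdf M t"
    proof -
      have "emeasure Unif {..cdf M t} = ennreal (cdf M t)"
        unfolding emeasure_Unif_atMost using cdf_nonneg[of t] cdf_bounded_prob[of t] by simp
      then show ?thesis using U.emeasure_eq_measure cdf_nonneg[of t] by simp
    qed
    finally show ?thesis .
  qed
  have m12: "measure ?P (S2 \<inter> S1) = measure ?P S1"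
  proof (rule measure_eq_AE)
    show "AE p in ?P. p \<in> S2 \<inter> S1 \<longleftrightarrow> p \<in> S1"
      using AET
    proof eventually_elim
      case (elim p)
      have "fst p \<le> t \<Longrightarrow> ?f p \<le> cdf M t"
        using DT_le_cdf[of "snd p" "fst p"] elim cdf_nondecreasing[of "fst p" t] by linarith
      then show ?case unfolding S1_def S2_def by auto
    qed
  qed (use S1m S2m in auto)
  have "measure ?P (S2 - S1) = measure ?P S2 - measure ?P (S2 \<inter> S1)"
    by (rule P.finite_measure_Diff') (use S1m S2m in auto)
  then have "measure ?P (S2 - S1) = 0" using m1 m2 m12 by simp
  then have "S2 - S1 \<in> null_sets ?P"
    using S1m S2m by (simp add: P.emeasure_eq_measure null_sets_def)
  then have AEn: "AE p in ?P. p \<notin> S2 - S1" by (rule AE_not_in)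
  show ?thesis
    using AET AEn
  proof eventually_elim
    case (elim p)
    have "fst p \<le> t \<Longrightarrow> ?f p \<le> cdf M t"
      using DT_le_cdf[of "snd p" "fst p"] elim cdf_nondecreasing[of "fst p" t] by linarith
    moreover have "?f p \<le> cdf M t \<Longrightarrow> fst p \<le> t"
      using elim(2) unfolding S1_def S2_def spP by auto
    ultimately show ?case by blast
  qed
qed

end



lemma comp_meas:
  assumes M: "sets M = sets (RPi I)" and i: "i \<in> I"
  shows "(\<lambda>x. x i) \<in> borel_measurable M"
  unfolding measurable_cong_sets[OF M refl] by (rule measurable_PiM_component_rev[OF i]) auto

lemma marg1_real_distribution:
  assumes "prob_space M" "sets M = sets (RPi I)" "i \<in> I"
  shows "real_distribution (marg1 M i)"
  unfolding marg1_def using assms comp_meas[OF assms(2,3)]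
  by (intro prob_space.real_distribution_distr) auto

locale sk1 =
  fixes I :: "'i set" and \<mu> :: "('i \<Rightarrow> real) measure"
  assumes prob: "prob_space \<mu>" and sets_mu: "sets \<mu> = sets (RPi I)"
begin

abbreviation "N i \<equiv> marg1 \<mu> i"

definition "\<Phi> p = (\<lambda>i\<in>I. DT (N i) (fst p i) (snd p))"
definition "\<psi> i p = (fst p i, snd p)"
definition "Cop = distr (\<mu> \<Otimes>\<^sub>M Unif) (RPi I) \<Phi>"

lemma N_rd: "i \<in> I \<Longrightarrow> real_distribution (N i)"
  by (rule marg1_real_distribution[OF prob sets_mu])

lemma P_prob: "prob_space (\<mu> \<Otimes>\<^sub>M Unif)"
  by (rule prob_space_pair[OF prob Unif_prob])

lemma space_P: "space (\<mu> \<Otimes>\<^sub>M Unif) = space \<mu> \<times> UNIV"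
  by (simp add: space_pair_measure)

lemma psi_meas: "i \<in> I \<Longrightarrow> \<psi> i \<in> measurable (\<mu> \<Otimes>\<^sub>M Unif) (N i \<Otimes>\<^sub>M Unif)"
  unfolding \<psi>_def
proof (rule measurable_Pair)
  assume i: "i \<in> I"
  have "(\<lambda>x. x i) \<in> measurable \<mu> (N i)"
    using comp_meas[OF sets_mu i] unfolding marg1_def by simp
  then show "(\<lambda>p. fst p i) \<in> measurable (\<mu> \<Otimes>\<^sub>M Unif) (N i)"
    by (rule measurable_compose[OF measurable_fst])
qed simp

lemma distr_psi: assumes i: "i \<in> I" shows "distr (\<mu> \<Otimes>\<^sub>M Unif) (N i \<Otimes>\<^sub>M Unif) (\<psi> i) = N i \<Otimes>\<^sub>M Unif"
proof -
  interpret U: prob_space Unif by (rule Unif_prob)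
  have ci: "(\<lambda>x. x i) \<in> measurable \<mu> borel" by (rule comp_meas[OF sets_mu i])
  have idm: "(\<lambda>x. x) \<in> measurable Unif Unif" by simp
  have sf: "sigma_finite_measure (distr Unif Unif (\<lambda>x. x))"
    by (simp add: distr_id U.sigma_finite_measure_axioms)
  have "N i \<Otimes>\<^sub>M Unif = distr \<mu> borel (\<lambda>x. x i) \<Otimes>\<^sub>M distr Unif Unif (\<lambda>x. x)"
    by (simp add: marg1_def distr_id)
  also have "\<dots> = distr (\<mu> \<Otimes>\<^sub>M Unif) (borel \<Otimes>\<^sub>M Unif) (\<lambda>(x, y). (x i, y))"
    by (rule pair_measure_distr[OF ci idm sf])
  also have "\<dots> = distr (\<mu> \<Otimes>\<^sub>M Unif) (N i \<Otimes>\<^sub>M Unif) (\<psi> i)"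
    by (rule distr_cong) (auto simp: \<psi>_def marg1_def intro!: sets_pair_measure_cong)
  finally show ?thesis ..
qed

lemma Phi_meas: "\<Phi> \<in> measurable (\<mu> \<Otimes>\<^sub>M Unif) (RPi I)"
  unfolding \<Phi>_def
proof (rule measurable_restrict)
  fix i assume i: "i \<in> I"
  interpret rd: real_distribution "N i" by (rule N_rd[OF i])
  have "(\<lambda>q. DT (N i) (fst q) (snd q)) \<circ> \<psi> i \<in> borel_measurable (\<mu> \<Otimes>\<^sub>M Unif)"
    by (rule measurable_comp[OF psi_meas[OF i] rd.DT_meas])
  then show "(\<lambda>p. DT (N i) (fst p i) (snd p)) \<in> borel_measurable (\<mu> \<Otimes>\<^sub>M Unif)"
    by (simp add: \<psi>_def o_def)
qed

lemma Cop_prob: "prob_space Cop"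
  unfolding Cop_def by (rule prob_space.prob_space_distr[OF P_prob Phi_meas])

lemma sets_Cop: "sets Cop = sets (RPi I)"
  unfolding Cop_def by simp

lemma marg1_Cop: assumes i: "i \<in> I" shows "marg1 Cop i = Unif"
proof -
  interpret rd: real_distribution "N i" by (rule N_rd[OF i])
  have ci: "(\<lambda>x. x i) \<in> measurable (RPi I) borel"
    by (rule measurable_PiM_component_rev[OF i]) auto
  have "marg1 Cop i = distr (\<mu> \<Otimes>\<^sub>M Unif) borel ((\<lambda>x. x i) \<circ> \<Phi>)"
    unfolding marg1_def Cop_def by (rule distr_distr[OF ci Phi_meas])
  also have "\<dots> = distr (\<mu> \<Otimes>\<^sub>M Unif) borel ((\<lambda>q. DT (N i) (fst q) (snd q)) \<circ> \<psi> i)"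
    by (rule distr_cong) (auto simp: \<Phi>_def \<psi>_def i)
  also have "\<dots> = distr (distr (\<mu> \<Otimes>\<^sub>M Unif) (N i \<Otimes>\<^sub>M Unif) (\<psi> i)) borel (\<lambda>q. DT (N i) (fst q) (snd q))"
    by (rule distr_distr[symmetric, OF rd.DT_meas psi_meas[OF i]])
  also have "\<dots> = Unif" unfolding distr_psi[OF i] by (rule rd.DT_unif)
  finally show ?thesis .
qed

lemma copula: "copula_measure I Cop"
  unfolding copula_measure_def using Cop_prob sets_Cop marg1_Cop by auto

lemma AE_psi:
  assumes i: "i \<in> I" and ae: "AE q in N i \<Otimes>\<^sub>M Unif. P q"
  shows "AE p in \<mu> \<Otimes>\<^sub>M Unif. P (\<psi> i p)"
proof -
  have "AE q in distr (\<mu> \<Otimes>\<^sub>M Unif) (N i \<Otimes>\<^sub>M Unif) (\<psi> i). P q"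
    unfolding distr_psi[OF i] by (rule ae)
  then show ?thesis by (rule AE_distrD[OF psi_meas[OF i]])
qed

lemma sklar: "sklar_rel I Cop \<mu> (\<lambda>i. cdf (N i))"
  unfolding sklar_rel_def
proof (intro allI impI ballI)
  fix J x assume J: "finite J \<and> J \<subseteq> I" and x: "x \<in> space (RPi J)"
  interpret P: prob_space "\<mu> \<Otimes>\<^sub>M Unif" by (rule P_prob)
  interpret U: prob_space Unif by (rule Unif_prob)
  let ?P = "\<mu> \<Otimes>\<^sub>M Unif"
  define A where "A = {p \<in> space ?P. \<forall>j\<in>J. fst p j \<le> x j}"
  define B where "B = {p \<in> space ?P. \<forall>j\<in>J. DT (N j) (fst p j) (snd p) \<le> cdf (N j) (x j)}"
  have boxI: "{u \<in> space (RPi I). \<forall>j\<in>J. u j \<le> cdf (N j) (x j)} \<in> sets (RPi I)"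
    using box_meas[of J I "\<lambda>j. cdf (N j) (x j)"] J by simp
  have "mcdf (marg Cop J) J (restrict (\<lambda>j. cdf (N j) (x j)) J)
      = measure Cop {u \<in> space Cop. \<forall>j\<in>J. u j \<le> restrict (\<lambda>j. cdf (N j) (x j)) J j}"
    using mcdf_marg[OF sets_Cop] J by blast
  also have "\<dots> = measure Cop {u \<in> space (RPi I). \<forall>j\<in>J. u j \<le> cdf (N j) (x j)}"
    by (simp add: Cop_def)
  also have "\<dots> = measure ?P (\<Phi> -` {u \<in> space (RPi I). \<forall>j\<in>J. u j \<le> cdf (N j) (x j)} \<inter> space ?P)"
    unfolding Cop_def by (rule measure_distr[OF Phi_meas boxI])
  also have "\<Phi> -` {u \<in> space (RPi I). \<forall>j\<in>J. u j \<le> cdf (N j) (x j)} \<inter> space ?P = B"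
    using J unfolding B_def \<Phi>_def by (auto simp: space_PiM)
  finally have lhs: "mcdf (marg Cop J) J (restrict (\<lambda>j. cdf (N j) (x j)) J) = measure ?P B" .
  have boxm: "{f \<in> space \<mu>. \<forall>j\<in>J. f j \<le> x j} \<in> sets \<mu>"
    using box_meas[of J I x] J sets_mu by (simp add: sets_eq_imp_space_eq[OF sets_mu])
  have "mcdf (marg \<mu> J) J x = measure \<mu> {f \<in> space \<mu>. \<forall>j\<in>J. f j \<le> x j}"
    using mcdf_marg[OF sets_mu] J by blast
  also have "\<dots> = measure ?P A"
  proof -
    have "A = {f \<in> space \<mu>. \<forall>j\<in>J. f j \<le> x j} \<times> UNIV" unfolding A_def space_P by auto
    then have "emeasure ?P A = emeasure \<mu> {f \<in> space \<mu>. \<forall>j\<in>J. f j \<le> x j} * emeasure Unif UNIV"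
      using U.emeasure_pair_measure_Times[OF boxm, of UNIV] by simp
    then have "emeasure ?P A = emeasure \<mu> {f \<in> space \<mu>. \<forall>j\<in>J. f j \<le> x j}"
      using U.emeasure_space_1 by simp
    then show ?thesis by (simp add: measure_def)
  qed
  finally have rhs: "mcdf (marg \<mu> J) J x = measure ?P A" .
  have Am: "A \<in> sets ?P"
  proof -
    have "A = {f \<in> space \<mu>. \<forall>j\<in>J. f j \<le> x j} \<times> UNIV" unfolding A_def space_P by auto
    then show ?thesis using boxm by simp
  qed
  have Bm: "B \<in> sets ?P"
  proof -
    have "B = \<Phi> -` {u \<in> space (RPi I). \<forall>j\<in>J. u j \<le> cdf (N j) (x j)} \<inter> space ?P"
      using J unfolding B_def \<Phi>_def by (auto simp: space_PiM)
    then show ?thesis using measurable_sets[OF Phi_meas boxI] by simp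
  qed
  have ae: "AE p in ?P. \<forall>j\<in>J. (fst p j \<le> x j \<longleftrightarrow> DT (N j) (fst p j) (snd p) \<le> cdf (N j) (x j))"
  proof (subst AE_ball_countable)
    show "countable J" using J by (simp add: countable_finite)
    show "\<forall>j\<in>J. AE p in ?P. (fst p j \<le> x j \<longleftrightarrow> DT (N j) (fst p j) (snd p) \<le> cdf (N j) (x j))"
    proof
      fix j assume j: "j \<in> J"
      then have jI: "j \<in> I" using J by auto
      interpret rd: real_distribution "N j" by (rule N_rd[OF jI])
      show "AE p in ?P. (fst p j \<le> x j \<longleftrightarrow> DT (N j) (fst p j) (snd p) \<le> cdf (N j) (x j))"
        using AE_psi[OF jI rd.DT_AE[of "x j"]] by (simp add: \<psi>_def)
    qed
  qed
  have "measure ?P B = measure ?P A"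
    by (rule measure_eq_AE[OF _ Bm Am]) (use ae in \<open>auto simp: A_def B_def\<close>)
  then show "mcdf (marg Cop J) J (restrict (\<lambda>j. cdf (N j) (x j)) J) = mcdf (marg \<mu> J) J x"
    using lhs rhs by simp
qed

end



definition qf :: "real measure \<Rightarrow> real \<Rightarrow> real" where
  "qf N u = (if u \<in> {0<..<1} then Inf {x. u \<le> cdf N x} else 0)"

lemma qf_galois:
  assumes "real_distribution N" "0 < u" "u < 1"
  shows "qf N u \<le> x \<longleftrightarrow> u \<le> cdf N x"
proof -
  interpret cdf_distribution N using assms(1) by (simp add: cdf_distribution_def)
  show ?thesis unfolding qf_def using pseudoinverse[of u x] assms by simp
qed

lemma qf_meas:
  assumes "real_distribution N"
  shows "qf N \<in> borel_measurable borel"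
proof -
  interpret cdf_distribution N using assms(1) by (simp add: cdf_distribution_def)
  have "(\<lambda>u. if u \<in> {0<..<1} then Inf {x. u \<le> cdf N x} else 0) \<in> borel_measurable borel"
  proof (subst measurable_If_restrict_space_iff)
    show "{x \<in> space borel. x \<in> {0<..<1::real}} \<in> sets borel" by simp
    have h: "(\<lambda>u. Inf {x. u \<le> cdf N x}) \<in> borel_measurable (restrict_space borel {0<..<1})"
      by (rule measurable_CI)
    show "(\<lambda>u. Inf {x. u \<le> cdf N x}) \<in> borel_measurable (restrict_space borel {x. x \<in> {0<..<1::real}})
      \<and> (\<lambda>u. 0::real) \<in> borel_measurable (restrict_space borel {x. x \<notin> {0<..<1::real}})"
      unfolding Collect_mem_eq by (intro conjI h measurable_const) simp
  qed
  then show ?thesis unfolding qf_def[abs_def] .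
qed

lemma AE_Unif_open: "AE t in Unif. 0 < t \<and> t < 1"
proof (rule AE_uniform_measureI)
  show "{0..1::real} \<in> sets lborel" by simp
  show "AE x in lborel. x \<in> {0..1::real} \<longrightarrow> 0 < x \<and> x < 1"
    using AE_lborel_singleton[of "0::real"] AE_lborel_singleton[of "1::real"]
    by eventually_elim auto
qed

lemma copula_AE:
  assumes C: "copula_measure I C" and j: "j \<in> I"
  shows "AE u in C. 0 < u j \<and> u j < 1"
proof -
  have sC: "sets C = sets (RPi I)" using C by (simp add: copula_measure_def)
  have m: "marg1 C j = Unif" using C j by (simp add: copula_measure_def)
  have "AE t in marg1 C j. 0 < t \<and> t < 1"
    unfolding m by (rule AE_Unif_open)
  then show ?thesis unfolding marg1_def by (rule AE_distrD[OF comp_meas[OF sC j]])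
qed

locale sk2 =
  fixes I :: "'i set" and C :: "('i \<Rightarrow> real) measure" and \<nu> :: "'i \<Rightarrow> real measure"
  assumes cop: "copula_measure I C" and rd: "\<And>i. i \<in> I \<Longrightarrow> real_distribution (\<nu> i)"
begin

lemma C_prob: "prob_space C" using cop by (simp add: copula_measure_def)
lemma sets_C: "sets C = sets (RPi I)" using cop by (simp add: copula_measure_def)

definition "\<Psi> u = (\<lambda>i\<in>I. qf (\<nu> i) (u i))"
definition "Mu = distr C (RPi I) \<Psi>"

lemma Psi_meas: "\<Psi> \<in> measurable C (RPi I)"
  unfolding \<Psi>_def
proof (rule measurable_restrict)
  fix i assume i: "i \<in> I"
  show "(\<lambda>u. qf (\<nu> i) (u i)) \<in> borel_measurable C"
    by (rule measurable_compose[OF comp_meas[OF sets_C i] qf_meas[OF rd[OF i]]])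
qed

lemma Mu_prob: "prob_space Mu"
  unfolding Mu_def by (rule prob_space.prob_space_distr[OF C_prob Psi_meas])

lemma sets_Mu: "sets Mu = sets (RPi I)" unfolding Mu_def by simp

lemma sklar: "sklar_rel I C Mu (\<lambda>i. cdf (\<nu> i))"
  unfolding sklar_rel_def
proof (intro allI impI ballI)
  fix J x assume J: "finite J \<and> J \<subseteq> I" and x: "x \<in> space (RPi J)"
  have spC: "space C = space (RPi I)" using sets_C by (rule sets_eq_imp_space_eq)
  define A where "A = {u \<in> space C. \<forall>j\<in>J. qf (\<nu> j) (u j) \<le> x j}"
  define B where "B = {u \<in> space C. \<forall>j\<in>J. u j \<le> cdf (\<nu> j) (x j)}"
  have Bm: "B \<in> sets C" unfolding B_def spC sets_C using box_meas[of J I] J by simp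
  have boxx: "{f \<in> space (RPi I). \<forall>j\<in>J. f j \<le> x j} \<in> sets (RPi I)" using box_meas[of J I] J by simp
  have Aeq: "A = \<Psi> -` {f \<in> space (RPi I). \<forall>j\<in>J. f j \<le> x j} \<inter> space C"
    unfolding A_def \<Psi>_def using J by (auto simp: space_PiM spC)
  have Am: "A \<in> sets C" unfolding Aeq by (rule measurable_sets[OF Psi_meas boxx])
  have "mcdf (marg C J) J (restrict (\<lambda>j. cdf (\<nu> j) (x j)) J)
      = measure C {u \<in> space C. \<forall>j\<in>J. u j \<le> restrict (\<lambda>j. cdf (\<nu> j) (x j)) J j}"
    using mcdf_marg[OF sets_C] J by blast
  also have "\<dots> = measure C B" unfolding B_def by simp
  finally have lhs: "mcdf (marg C J) J (restrict (\<lambda>j. cdf (\<nu> j) (x j)) J) = measure C B" .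
  have "mcdf (marg Mu J) J x = measure Mu {f \<in> space Mu. \<forall>j\<in>J. f j \<le> x j}"
    using mcdf_marg[OF sets_Mu] J by blast
  also have "\<dots> = measure Mu {f \<in> space (RPi I). \<forall>j\<in>J. f j \<le> x j}" by (simp add: Mu_def)
  also have "\<dots> = measure C A" unfolding Mu_def Aeq by (rule measure_distr[OF Psi_meas boxx])
  finally have rhs: "mcdf (marg Mu J) J x = measure C A" .
  have ae: "AE u in C. \<forall>j\<in>J. 0 < u j \<and> u j < 1"
  proof (subst AE_ball_countable)
    show "countable J" using J by (simp add: countable_finite)
    show "\<forall>j\<in>J. AE u in C. 0 < u j \<and> u j < 1" using copula_AE[OF cop] J by auto
  qed
  have "measure C B = measure C A"
  proof (rule measure_eq_AE[OF _ Bm Am])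
    show "AE u in C. u \<in> B \<longleftrightarrow> u \<in> A"
      using ae
    proof eventually_elim
      case (elim u)
      have "(\<forall>j\<in>J. u j \<le> cdf (\<nu> j) (x j)) \<longleftrightarrow> (\<forall>j\<in>J. qf (\<nu> j) (u j) \<le> x j)"
      proof (intro ball_cong refl)
        fix j assume "j \<in> J"
        then show "u j \<le> cdf (\<nu> j) (x j) \<longleftrightarrow> qf (\<nu> j) (u j) \<le> x j"
          using qf_galois[OF rd, of j "u j" "x j"] elim J by auto
      qed
      then show ?case unfolding A_def B_def by auto
    qed
  qed
  then show "mcdf (marg C J) J (restrict (\<lambda>j. cdf (\<nu> j) (x j)) J) = mcdf (marg Mu J) J x"
    using lhs rhs by simp
qed

end

lemma sklar_unique_mu:
  assumes P: "prob_space P" "sets P = sets (RPi I)" "sklar_rel I C P F"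
    and Q: "prob_space Q" "sets Q = sets (RPi I)" "sklar_rel I C Q F"
  shows "P = Q"
proof (rule uniq_boxes[OF P(1,2) Q(1,2)])
  fix J z assume J: "finite J" "J \<subseteq> I"
  have x: "restrict z J \<in> space (RPi J)" by (simp add: space_PiM)
  have spP: "space P = space (RPi I)" using P(2) by (rule sets_eq_imp_space_eq)
  have spQ: "space Q = space (RPi I)" using Q(2) by (rule sets_eq_imp_space_eq)
  have sP: "\<forall>x\<in>space (RPi J). mcdf (marg C J) J (restrict (\<lambda>j. F j (x j)) J) = mcdf (marg P J) J x"
    using P(3) J unfolding sklar_rel_def by blast
  have sQ: "\<forall>x\<in>space (RPi J). mcdf (marg C J) J (restrict (\<lambda>j. F j (x j)) J) = mcdf (marg Q J) J x"
    using Q(3) J unfolding sklar_rel_def by blast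
  have "measure P {f \<in> space (RPi I). \<forall>j\<in>J. f j \<le> z j} = mcdf (marg P J) J (restrict z J)"
    using mcdf_marg[OF P(2) J, of "restrict z J"] spP by simp
  also have "\<dots> = mcdf (marg C J) J (restrict (\<lambda>j. F j (restrict z J j)) J)"
    using bspec[OF sP x] by (rule sym)
  also have "\<dots> = mcdf (marg Q J) J (restrict z J)"
    using bspec[OF sQ x] .
  also have "\<dots> = measure Q {f \<in> space (RPi I). \<forall>j\<in>J. f j \<le> z j}"
    using mcdf_marg[OF Q(2) J, of "restrict z J"] spQ by simp
  finally show "measure P {f \<in> space (RPi I). \<forall>j\<in>J. f j \<le> z j} = measure Q {f \<in> space (RPi I). \<forall>j\<in>J. f j \<le> z j}" .
qed



definition clip :: "real \<Rightarrow> real" where "clip t = max 0 (min 1 t)"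

lemma measure_Unif_atMost: "measure Unif {..a} = clip a"
proof -
  interpret U: prob_space Unif by (rule Unif_prob)
  have "ennreal (measure Unif {..a}) = ennreal (clip a)"
    using emeasure_Unif_atMost[of a] U.emeasure_eq_measure unfolding clip_def by simp
  then show ?thesis unfolding clip_def by (simp add: ennreal_inj)
qed

lemma measure_Unif_Ioc: "measure Unif {a<..b} \<le> \<bar>clip b - clip a\<bar>"
proof (cases "a < b")
  case True
  interpret U: prob_space Unif by (rule Unif_prob)
  have e: "{a<..b} = {..b} - {..a}" by auto
  have "measure Unif ({..b} - {..a}) = measure Unif {..b} - measure Unif {..a}"
    by (rule U.finite_measure_Diff) (use True in auto)
  then show ?thesis unfolding e measure_Unif_atMost by simp
next
  case False
  then have "{a<..b} = {}" by auto
  then show ?thesis by simp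
qed

abbreviation box :: "'i set \<Rightarrow> 'i set \<Rightarrow> ('i \<Rightarrow> real) \<Rightarrow> ('i \<Rightarrow> real) set" where
  "box I J z \<equiv> {u \<in> space (RPi I). \<forall>j\<in>J. u j \<le> z j}"

lemma copula_lip:
  assumes C: "copula_measure I C" and J: "finite J" "J \<subseteq> I"
  shows "measure C (box I J z) \<le> measure C (box I J z') + (\<Sum>j\<in>J. \<bar>clip (z j) - clip (z' j)\<bar>)"
proof -
  have sC: "sets C = sets (RPi I)" using C by (simp add: copula_measure_def)
  have spC: "space C = space (RPi I)" using sC by (rule sets_eq_imp_space_eq)
  interpret P: prob_space C using C by (simp add: copula_measure_def)
  define S where "S j = (\<lambda>u. u j) -` {z' j<..z j} \<inter> space C" for j
  have Sm: "S j \<in> sets C" if "j \<in> J" for j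
    unfolding S_def using comp_meas[OF sC, of j] that J by (intro measurable_sets) auto
  have bm: "box I J w \<in> sets C" for w using box_meas[OF J, of w] sC by simp
  have sub: "box I J z \<subseteq> box I J z' \<union> (\<Union>j\<in>J. S j)"
    unfolding S_def spC by (auto simp: not_le)
  have "measure C (box I J z) \<le> measure C (box I J z' \<union> (\<Union>j\<in>J. S j))"
    by (rule P.finite_measure_mono[OF sub]) (use bm Sm J in auto)
  also have "\<dots> \<le> measure C (box I J z') + measure C (\<Union>j\<in>J. S j)"
    by (rule measure_Un_le) (use bm Sm J in auto)
  also have "measure C (\<Union>j\<in>J. S j) \<le> (\<Sum>j\<in>J. measure C (S j))"
    by (rule measure_UNION_le[OF J(1) Sm])
  also have "(\<Sum>j\<in>J. measure C (S j)) \<le> (\<Sum>j\<in>J. \<bar>clip (z j) - clip (z' j)\<bar>)"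
  proof (rule sum_mono)
    fix j assume j: "j \<in> J"
    have m: "marg1 C j = Unif" using C j J by (auto simp: copula_measure_def)
    have "measure C (S j) = measure (marg1 C j) {z' j<..z j}"
      unfolding S_def marg1_def by (rule measure_distr[symmetric]) (use comp_meas[OF sC, of j] j J in auto)
    also have "\<dots> \<le> \<bar>clip (z j) - clip (z' j)\<bar>" unfolding m by (rule measure_Unif_Ioc)
    finally show "measure C (S j) \<le> \<bar>clip (z j) - clip (z' j)\<bar>" .
  qed
  finally show ?thesis by simp
qed

lemma cdf_surj:
  assumes N: "real_distribution N" and c: "\<And>t. isCont (cdf N) t" and w: "0 < w" "w < 1"
  shows "\<exists>y. cdf N y = w"
proof -
  interpret real_distribution N by fact
  have "eventually (\<lambda>x. cdf N x < w) at_bot"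
    using order_tendstoD(2)[OF cdf_lim_at_bot w(1)] .
  then obtain a where a: "cdf N a < w" unfolding eventually_at_bot_linorder by auto
  have "eventually (\<lambda>x. w < cdf N x) at_top"
    using order_tendstoD(1)[OF cdf_lim_at_top_prob w(2)] .
  then obtain b where b: "w < cdf N b" unfolding eventually_at_top_linorder by auto
  have ab: "a \<le> b"
  proof (rule ccontr)
    assume "\<not> a \<le> b"
    then have "cdf N b \<le> cdf N a" by (intro cdf_nondecreasing) auto
    then show False using a b by linarith
  qed
  have "continuous_on {a..b} (cdf N)" by (intro continuous_at_imp_continuous_on ballI c)
  from IVT'[of "cdf N" a w b, OF _ _ ab this] a b show ?thesis by auto
qed

lemma le_eps_zero:
  fixes e K :: real
  assumes K: "0 \<le> K" and h: "\<And>d. 0 < d \<Longrightarrow> d < 1/2 \<Longrightarrow> e \<le> K * d"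
  shows "e \<le> 0"
proof (rule ccontr)
  assume n: "\<not> e \<le> 0"
  define d where "d = min (1/4) (e / (2 * (K + 1)))"
  have d0: "0 < d" unfolding d_def using n K by simp
  have d1: "d < 1/2" unfolding d_def by simp
  have "d \<le> e / (2 * (K + 1))" unfolding d_def by simp
  then have "K * d \<le> K * (e / (2 * (K + 1)))" using K by (rule mult_left_mono)
  also have "K * (e / (2 * (K + 1))) < e"
  proof -
    have "K * e < 2 * (K + 1) * e" using n K by simp
    then show ?thesis using K by (simp add: field_simps)
  qed
  finally show False using h[OF d0 d1] by linarith
qed

lemma copula_unique_cont:
  assumes C1: "copula_measure I C1" and C2: "copula_measure I C2"
    and surj: "\<And>i w. i \<in> I \<Longrightarrow> 0 < w \<Longrightarrow> w < 1 \<Longrightarrow> \<exists>y. F i y = w"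
    and s1: "sklar_rel I C1 \<mu> F" and s2: "sklar_rel I C2 \<mu> F"
  shows "C1 = C2"
proof (rule uniq_boxes)
  show "prob_space C1" "sets C1 = sets (RPi I)" "prob_space C2" "sets C2 = sets (RPi I)"
    using C1 C2 by (auto simp: copula_measure_def)
  fix J z assume J: "finite J" "J \<subseteq> I"
  have sp1: "space C1 = space (RPi I)" using C1 by (intro sets_eq_imp_space_eq) (simp add: copula_measure_def)
  have sp2: "space C2 = space (RPi I)" using C2 by (intro sets_eq_imp_space_eq) (simp add: copula_measure_def)
  have sC1: "sets C1 = sets (RPi I)" and sC2: "sets C2 = sets (RPi I)" using C1 C2 by (auto simp: copula_measure_def)
  let ?m1 = "measure C1 (box I J z)" and ?m2 = "measure C2 (box I J z)"
  have main: "\<bar>?m1 - ?m2\<bar> \<le> (2 * real (card J)) * d" if d: "0 < d" "d < 1/2" for d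
  proof -
    define w where "w j = max d (min (1 - d) (clip (z j)))" for j
    have w01: "0 < w j" "w j < 1" for j unfolding w_def using d by auto
    have "\<forall>j\<in>J. \<exists>y. F j y = w j" using surj w01 J by auto
    then obtain y where y: "\<And>j. j \<in> J \<Longrightarrow> F j (y j) = w j" by metis
    define y' where "y' = restrict y J"
    have y'sp: "y' \<in> space (RPi J)" unfolding y'_def by (simp add: space_PiM)
    have rw: "restrict (\<lambda>j. F j (y' j)) J = restrict w J"
      unfolding y'_def using y by (auto simp: fun_eq_iff)
    have e1: "measure C1 (box I J w) = mcdf (marg \<mu> J) J y'"
    proof -
      have "mcdf (marg C1 J) J (restrict (\<lambda>j. F j (y' j)) J) = mcdf (marg \<mu> J) J y'"
        using s1 J y'sp unfolding sklar_rel_def by blast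
      moreover have "mcdf (marg C1 J) J (restrict w J) = measure C1 (box I J w)"
        using mcdf_marg[OF sC1 J, of "restrict w J"] sp1 by simp
      ultimately show ?thesis using rw by simp
    qed
    have e2: "measure C2 (box I J w) = mcdf (marg \<mu> J) J y'"
    proof -
      have "mcdf (marg C2 J) J (restrict (\<lambda>j. F j (y' j)) J) = mcdf (marg \<mu> J) J y'"
        using s2 J y'sp unfolding sklar_rel_def by blast
      moreover have "mcdf (marg C2 J) J (restrict w J) = measure C2 (box I J w)"
        using mcdf_marg[OF sC2 J, of "restrict w J"] sp2 by simp
      ultimately show ?thesis using rw by simp
    qed
    have cw: "\<bar>clip (z j) - clip (w j)\<bar> \<le> d" for j
    proof -
      have "clip (w j) = w j" unfolding clip_def using w01[of j] by simp
      moreover have "0 \<le> clip (z j)" "clip (z j) \<le> 1" unfolding clip_def by auto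
      ultimately show ?thesis unfolding w_def using d by auto
    qed
    have sum1: "(\<Sum>j\<in>J. \<bar>clip (z j) - clip (w j)\<bar>) \<le> real (card J) * d"
      using sum_bounded_above[of J "\<lambda>j. \<bar>clip (z j) - clip (w j)\<bar>" d] cw by simp
    have sum2: "(\<Sum>j\<in>J. \<bar>clip (w j) - clip (z j)\<bar>) \<le> real (card J) * d"
      using sum_bounded_above[of J "\<lambda>j. \<bar>clip (w j) - clip (z j)\<bar>" d] cw by (simp add: abs_minus_commute)
    have a1: "?m1 \<le> measure C1 (box I J w) + real (card J) * d"
      using copula_lip[OF C1 J, of z w] sum1 by linarith
    have b1: "measure C1 (box I J w) \<le> ?m1 + real (card J) * d"
      using copula_lip[OF C1 J, of w z] sum2 by linarith
    have a2: "?m2 \<le> measure C2 (box I J w) + real (card J) * d"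
      using copula_lip[OF C2 J, of z w] sum1 by linarith
    have b2: "measure C2 (box I J w) \<le> ?m2 + real (card J) * d"
      using copula_lip[OF C2 J, of w z] sum2 by linarith
    show ?thesis using a1 b1 a2 b2 e1 e2 by linarith
  qed
  have "\<bar>?m1 - ?m2\<bar> \<le> 0"
    by (rule le_eps_zero[of "2 * real (card J)"]) (use main in auto)
  then show "?m1 = ?m2" by simp
qed



theorem theorem2p3:
  fixes I :: "'i set"
  shows "(\<forall>\<mu>. prob_space \<mu> \<and> sets \<mu> = sets (RPi I) \<longrightarrow>
            (\<exists>C. copula_measure I C \<and> sklar_rel I C \<mu> (\<lambda>i. cdf (marg1 \<mu> i))) \<and>
            ((\<forall>i\<in>I. \<forall>t. isCont (cdf (marg1 \<mu> i)) t) \<longrightarrow>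
               (\<exists>!C. copula_measure I C \<and> sklar_rel I C \<mu> (\<lambda>i. cdf (marg1 \<mu> i)))))
       \<and> (\<forall>C (\<nu> :: 'i \<Rightarrow> real measure). copula_measure I C \<and> (\<forall>i\<in>I. real_distribution (\<nu> i)) \<longrightarrow>
            (\<exists>!\<mu>. prob_space \<mu> \<and> sets \<mu> = sets (RPi I) \<and> sklar_rel I C \<mu> (\<lambda>i. cdf (\<nu> i))))"
proof (rule conjI)
  show "\<forall>\<mu>. prob_space \<mu> \<and> sets \<mu> = sets (RPi I) \<longrightarrow>
            (\<exists>C. copula_measure I C \<and> sklar_rel I C \<mu> (\<lambda>i. cdf (marg1 \<mu> i))) \<and>
            ((\<forall>i\<in>I. \<forall>t. isCont (cdf (marg1 \<mu> i)) t) \<longrightarrow>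
               (\<exists>!C. copula_measure I C \<and> sklar_rel I C \<mu> (\<lambda>i. cdf (marg1 \<mu> i))))"
  proof (intro allI impI)
    fix \<mu> :: "('i \<Rightarrow> real) measure"
    assume h: "prob_space \<mu> \<and> sets \<mu> = sets (RPi I)"
    interpret S: sk1 I \<mu> using h by (simp add: sk1_def)
    have ex: "copula_measure I S.Cop \<and> sklar_rel I S.Cop \<mu> (\<lambda>i. cdf (marg1 \<mu> i))"
      by (intro conjI S.copula S.sklar)
    show "(\<exists>C. copula_measure I C \<and> sklar_rel I C \<mu> (\<lambda>i. cdf (marg1 \<mu> i))) \<and>
            ((\<forall>i\<in>I. \<forall>t. isCont (cdf (marg1 \<mu> i)) t) \<longrightarrow>
               (\<exists>!C. copula_measure I C \<and> sklar_rel I C \<mu> (\<lambda>i. cdf (marg1 \<mu> i))))"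
    proof (intro conjI impI)
      show "\<exists>C. copula_measure I C \<and> sklar_rel I C \<mu> (\<lambda>i. cdf (marg1 \<mu> i))" using ex by blast
      assume cont: "\<forall>i\<in>I. \<forall>t. isCont (cdf (marg1 \<mu> i)) t"
      have surj: "\<exists>y. cdf (marg1 \<mu> i) y = w" if "i \<in> I" "0 < w" "w < 1" for i w
        by (rule cdf_surj[OF S.N_rd[OF that(1)]]) (use cont that in auto)
      show "\<exists>!C. copula_measure I C \<and> sklar_rel I C \<mu> (\<lambda>i. cdf (marg1 \<mu> i))"
      proof (rule ex1I[of _ S.Cop])
        show "copula_measure I S.Cop \<and> sklar_rel I S.Cop \<mu> (\<lambda>i. cdf (marg1 \<mu> i))" by (rule ex)
        fix C' assume C': "copula_measure I C' \<and> sklar_rel I C' \<mu> (\<lambda>i. cdf (marg1 \<mu> i))"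
        show "C' = S.Cop"
          by (rule copula_unique_cont[OF conjunct1[OF C'] conjunct1[OF ex] surj conjunct2[OF C'] conjunct2[OF ex]])
      qed
    qed
  qed
next
  show "\<forall>C (\<nu> :: 'i \<Rightarrow> real measure). copula_measure I C \<and> (\<forall>i\<in>I. real_distribution (\<nu> i)) \<longrightarrow>
            (\<exists>!\<mu>. prob_space \<mu> \<and> sets \<mu> = sets (RPi I) \<and> sklar_rel I C \<mu> (\<lambda>i. cdf (\<nu> i)))"
  proof (intro allI impI)
    fix C :: "('i \<Rightarrow> real) measure" and \<nu> :: "'i \<Rightarrow> real measure"
    assume h: "copula_measure I C \<and> (\<forall>i\<in>I. real_distribution (\<nu> i))"
    interpret S: sk2 I C \<nu> using h by (simp add: sk2_def)
    show "\<exists>!\<mu>. prob_space \<mu> \<and> sets \<mu> = sets (RPi I) \<and> sklar_rel I C \<mu> (\<lambda>i. cdf (\<nu> i))"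
    proof (rule ex1I[of _ S.Mu])
      show "prob_space S.Mu \<and> sets S.Mu = sets (RPi I) \<and> sklar_rel I C S.Mu (\<lambda>i. cdf (\<nu> i))"
        by (intro conjI S.Mu_prob S.sets_Mu S.sklar)
      fix \<mu>' assume m: "prob_space \<mu>' \<and> sets \<mu>' = sets (RPi I) \<and> sklar_rel I C \<mu>' (\<lambda>i. cdf (\<nu> i))"
      show "\<mu>' = S.Mu"
        using m by (intro sklar_unique_mu[OF _ _ _ S.Mu_prob S.sets_Mu S.sklar]) auto
    qed
  qed
qed


end
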